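(* Let $\rho,\lambda,\kappa$ be nonnegative integers with $P(\lambda+\kappa+1)\le\rho\le\frac34\lambda$. Let $\mathcal B$ be the set of integers $0\le l<q^\lambda$ for which there exist integers $0\le k_1,k_2<q^\kappa$ with $$a_P(lq^\kappa+k_1+k_2)-a_P(lq^\kappa+k_1)\ne a_P^{(\kappa+\rho)}(lq^\kappa+k_1+k_2)-a_P^{(\kappa+\rho)}(lq^\kappa+k_1).$$ Then $\#\mathcal B\ll q^{\lambda-\rho+P(\lambda+\kappa+1)}$.
   Context: Fix an integer $q\ge2$. For an integer $n\ge0$, $\varepsilon_i(n)$ is the $i$-th digit of $n$ in base $q$ ($\varepsilon_0$ the units digit). For real $x>0$, $T_q(x)=\lfloor\log x/\log q\rfloor$. $P:\mathbb{N}\to\mathbb{N}$ is a nondecreasing integer-valued function. For integers $x,y\ge0$, $a_P(x,y)=\sum_{i\ge0}\varepsilon_{i+P(y)}(x)\cdots\varepsilon_i(x)$ and $a_P(n)=a_P(n,T_q(n))$. For an integer $\rho\ge0$ and integer $n\ge1$, $a_P^{(\rho)}(n)=a_P(n\bmod q^\rho,T_q(n))$ (note: the block length is determined by $T_q(n)$, not by $T_q(n\bmod q^\rho)$). The implied constant depends at most on $q$. *)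

theory Defs
  imports Complex_Main
begin

definition digit :: "nat \<Rightarrow> nat \<Rightarrow> nat \<Rightarrow> nat" where
  "digit q i n = (n div q ^ i) mod q"

text \<open>T_q(x) = floor(log x / log q); for x = 0 Isabelle's ln 0 = 0 gives 0
  (only ever used at 0 where the value is irrelevant).\<close>
definition Tq :: "nat \<Rightarrow> nat \<Rightarrow> nat" where
  "Tq q n = nat \<lfloor>ln (real n) / ln (real q)\<rfloor>"

text \<open>a_P(x,y) = sum_{i>=0} eps_{i+P(y)}(x) ... eps_i(x). All terms with i > x
  vanish (since q^i > x), so the sum over i \<le> x is the full series.\<close>
definition aP2 :: "nat \<Rightarrow> (nat \<Rightarrow> nat) \<Rightarrow> nat \<Rightarrow> nat \<Rightarrow> nat" where
  "aP2 q P x y = (\<Sum>i\<le>x. \<Prod>j\<le>P y. digit q (i + j) x)"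

definition aP :: "nat \<Rightarrow> (nat \<Rightarrow> nat) \<Rightarrow> nat \<Rightarrow> nat" where
  "aP q P n = aP2 q P n (Tq q n)"

definition aPtrunc :: "nat \<Rightarrow> (nat \<Rightarrow> nat) \<Rightarrow> nat \<Rightarrow> nat \<Rightarrow> nat" where
  "aPtrunc q P \<rho> n = aP2 q P (n mod q ^ \<rho>) (Tq q n)"

definition badSet :: "nat \<Rightarrow> (nat \<Rightarrow> nat) \<Rightarrow> nat \<Rightarrow> nat \<Rightarrow> nat \<Rightarrow> nat set" where
  "badSet q P \<rho> lam \<kappa> = {l. l < q ^ lam \<and> (\<exists>k1 k2. k1 < q ^ \<kappa> \<and> k2 < q ^ \<kappa> \<and>
      int (aP q P (l * q ^ \<kappa> + k1 + k2)) - int (aP q P (l * q ^ \<kappa> + k1)) \<noteq>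
      int (aPtrunc q P (\<kappa> + \<rho>) (l * q ^ \<kappa> + k1 + k2)) - int (aPtrunc q P (\<kappa> + \<rho>) (l * q ^ \<kappa> + k1)))}"

end

theory Submission
  imports Defs
begin

lemma Tq_unique:
  assumes q: "q \<ge> 2" and lo: "q ^ m \<le> n" and hi: "n < q ^ (m+1)"
  shows "Tq q n = m"
proof -
  have "q^m \<ge> 1" using q by simp
  hence n1: "n \<ge> 1" using lo by linarith
  have lq: "ln (real q) > 0" using q by simp
  have a: "real m * ln (real q) \<le> ln (real n)"
  proof -
    have "real (q^m) \<le> real n" using lo by linarith
    hence "ln (real (q^m)) \<le> ln (real n)" using q n1 by (subst ln_le_cancel_iff) auto
    thus ?thesis using q by (simp add: ln_realpow)
  qed
  have b: "ln (real n) < (real m + 1) * ln (real q)"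
  proof -
    have "real n < real (q^(m+1))" using hi by linarith
    hence "ln (real n) < ln (real (q^(m+1)))" using n1 by (subst ln_less_cancel_iff) auto
    moreover have "ln (real q ^ (m+1)) = real (m+1) * ln (real q)" using ln_realpow[of "real q" "m+1"] q by linarith
    ultimately show ?thesis by (simp add: algebra_simps)
  qed
  have "real m \<le> ln (real n) / ln (real q)" using a lq by (simp add: pos_le_divide_eq)
  moreover have "ln (real n) / ln (real q) < real m + 1" using b lq by (simp add: pos_divide_less_eq)
  ultimately have "\<lfloor>ln (real n) / ln (real q)\<rfloor> = int m" by (simp add: floor_eq_iff)
  thus ?thesis by (simp add: Tq_def)
qed

lemma Tq_char:
  assumes q: "q \<ge> 2" and n: "n \<ge> 1"
  shows "q ^ Tq q n \<le> n \<and> n < q ^ (Tq q n + 1)"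
proof -
  obtain m where "q^m \<le> n" "n < q^(m+1)" using ex_power_ivl1[OF q n] by auto
  thus ?thesis using Tq_unique[OF q] by auto
qed

lemma Tq_zero: "Tq q 0 = 0" by (simp add: Tq_def)

lemma digit_mod_low: assumes "k < e" "q \<ge> 1" shows "digit q k (n mod q^e) = digit q k n"
proof -
  have e: "q^e = q^k * q^(e-k)" using assms by (simp add: power_add[symmetric])
  have "n mod q^e div q^k = (n div q^k) mod q^(e-k)"
    using assms(2) unfolding e by (simp add: mod_mult2_eq div_mult2_eq)
  moreover have "q dvd q^(e-k)" using assms by (simp add: dvd_power)
  ultimately show ?thesis unfolding digit_def by (simp add: mod_mod_cancel)
qed

lemma digit_mod_high: assumes "q \<ge> 1" "e \<le> k" shows "digit q k (n mod q^e) = 0"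
proof -
  have "n mod q^e < q^e" using assms by simp
  also have "q^e \<le> q^k" using assms by (simp add: power_increasing)
  finally show ?thesis by (simp add: digit_def)
qed

lemma digit_shift: assumes "e \<le> k" shows "digit q k n = digit q (k - e) (n div q^e)"
proof -
  have e: "q^k = q^e * q^(k-e)" using assms by (simp add: power_add[symmetric])
  show ?thesis unfolding digit_def e by (simp add: div_mult2_eq)
qed

lemma digit_zero_num: "digit q k 0 = 0" by (simp add: digit_def)

lemma aP2_ext:
  assumes q: "q \<ge> 2" and xN: "x \<le> N"
  shows "aP2 q P x y = (\<Sum>i\<le>N. \<Prod>j\<le>P y. digit q (i + j) x)"
proof -
  have "(\<Sum>i\<le>N. \<Prod>j\<le>P y. digit q (i + j) x) = (\<Sum>i\<le>x. \<Prod>j\<le>P y. digit q (i + j) x)"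
  proof (rule sum.mono_neutral_right)
    show "\<forall>i\<in>{..N} - {..x}. (\<Prod>j\<le>P y. digit q (i + j) x) = 0"
    proof
      fix i assume i: "i \<in> {..N} - {..x}"
      have "x < i" using i by auto
      also have "i < q^i" using q by (simp add: less_exp[THEN less_le_trans] power_mono)
      finally have "digit q (i+0) x = 0" by (simp add: digit_def)
      thus "(\<Prod>j\<le>P y. digit q (i + j) x) = 0"
        by (intro prod_zero bexI[of _ 0]) auto
    qed
  qed (use xN in auto)
  thus ?thesis by (simp add: aP2_def)
qed

definition Dd :: "nat \<Rightarrow> (nat \<Rightarrow> nat) \<Rightarrow> nat \<Rightarrow> nat \<Rightarrow> nat \<Rightarrow> int" where
  "Dd q P e N n = (\<Sum>i\<le>N. if e \<le> i + P (Tq q n) then int (\<Prod>j\<le>P (Tq q n). digit q (i+j) n) else 0)"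

lemma diff_formula:
  assumes q: "q \<ge> 2" and nN: "n \<le> N"
  shows "int (aP q P n) - int (aPtrunc q P e n) = Dd q P e N n"
proof -
  define p where "p = P (Tq q n)"
  have m: "n mod q^e \<le> N" using nN by (meson le_trans mod_less_eq_dividend)
  have "int (aP q P n) - int (aPtrunc q P e n) =
     (\<Sum>i\<le>N. int (\<Prod>j\<le>p. digit q (i + j) n) - int (\<Prod>j\<le>p. digit q (i + j) (n mod q^e)))"
    unfolding aP_def aPtrunc_def aP2_ext[OF q nN] aP2_ext[OF q m] p_def
    by (simp add: sum_subtractf)
  also have "\<dots> = Dd q P e N n"
    unfolding Dd_def p_def[symmetric]
  proof (rule sum.cong[OF refl])
    fix i assume "i \<in> {..N}"
    show "int (\<Prod>j\<le>p. digit q (i + j) n) - int (\<Prod>j\<le>p. digit q (i + j) (n mod q^e)) =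
      (if e \<le> i + p then int (\<Prod>j\<le>p. digit q (i+j) n) else 0)"
    proof (cases "e \<le> i + p")
      case True
      have "digit q (i + p) (n mod q^e) = 0" using True q by (intro digit_mod_high) auto
      hence "(\<Prod>j\<le>p. digit q (i + j) (n mod q^e)) = 0" by (intro prod_zero bexI[of _ p]) auto
      thus ?thesis using True by simp
    next
      case False
      have "(\<Prod>j\<le>p. digit q (i + j) (n mod q^e)) = (\<Prod>j\<le>p. digit q (i + j) n)"
        using False q by (intro prod.cong refl digit_mod_low) auto
      thus ?thesis using False by simp
    qed
  qed
  finally show ?thesis .
qed

lemma Tq_shift:
  assumes q: "q \<ge> 2" and H: "n div q^E = H" "H > 0"
  shows "Tq q n = E + Tq q H"
proof -
  define t where "t = Tq q H"
  have t: "q^t \<le> H" "H < q^(t+1)" using Tq_char[OF q, of H] H t_def by auto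
  have qE: "q^E > 0" using q by simp
  have "H * q^E \<le> n" using H(1) by (metis div_times_less_eq_dividend)
  moreover have "q^t * q^E \<le> H * q^E" using t by (intro mult_right_mono) auto
  moreover have "q^(E+t) = q^t * q^E" by (simp add: power_add mult.commute)
  ultimately have lo: "q^(E+t) \<le> n" by linarith
  have "n < (H+1) * q^E"
  proof -
    have "n = n div q^E * q^E + n mod q^E" by (rule div_mult_mod_eq[symmetric])
    moreover have "n mod q^E < q^E" using qE by simp
    ultimately show ?thesis using H(1) by (simp add: algebra_simps)
  qed
  moreover have "(H+1) * q^E \<le> q^(t+1) * q^E" using t by (intro mult_right_mono) auto
  moreover have "q^(E+t+1) = q^(t+1) * q^E" by (simp add: power_add mult.commute)
  ultimately have hi: "n < q^(E+t+1)" by linarith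
  show ?thesis using Tq_unique[OF q lo] hi t_def by simp
qed

lemma D_eq:
  assumes q: "q \<ge> 2" and H: "n1 div q^E = n2 div q^E"
    and p1: "P (Tq q n1) + E \<le> e" and p2: "P (Tq q n2) + E \<le> e"
  shows "Dd q P e N n1 = Dd q P e N n2"
proof (cases "n1 div q^E = 0")
  case True
  have z: "Dd q P e N n = 0" if "n div q^E = 0" "P (Tq q n) + E \<le> e" for n
    unfolding Dd_def
  proof (intro sum.neutral ballI)
    fix i assume "i \<in> {..N}"
    show "(if e \<le> i + P (Tq q n) then int (\<Prod>j\<le>P (Tq q n). digit q (i+j) n) else 0) = 0"
    proof (cases "e \<le> i + P (Tq q n)")
      case True
      have "digit q (i + P (Tq q n)) n = digit q (i + P (Tq q n) - E) (n div q^E)"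
        using True that by (intro digit_shift) auto
      hence "digit q (i + P (Tq q n)) n = 0" using that by (simp add: digit_def)
      hence "(\<Prod>j\<le>P (Tq q n). digit q (i+j) n) = 0" by (intro prod_zero bexI[of _ "P (Tq q n)"]) auto
      thus ?thesis by simp
    qed simp
  qed
  show ?thesis using z[OF True p1] z[of n2] True H p2 by simp
next
  case False
  have T: "Tq q n1 = Tq q n2" using Tq_shift[OF q refl, of n1 E] Tq_shift[OF q refl, of n2 E] False H by simp
  show ?thesis unfolding Dd_def T
  proof (rule sum.cong[OF refl])
    fix i assume "i \<in> {..N}"
    show "(if e \<le> i + P (Tq q n2) then int (\<Prod>j\<le>P (Tq q n2). digit q (i+j) n1) else 0) =
          (if e \<le> i + P (Tq q n2) then int (\<Prod>j\<le>P (Tq q n2). digit q (i+j) n2) else 0)"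
    proof (cases "e \<le> i + P (Tq q n2)")
      case True
      have "(\<Prod>j\<le>P (Tq q n2). digit q (i+j) n1) = (\<Prod>j\<le>P (Tq q n2). digit q (i+j) n2)"
      proof (rule prod.cong[OF refl])
        fix j assume "j \<in> {..P (Tq q n2)}"
        have "E \<le> i + j" using True p2 by linarith
        thus "digit q (i+j) n1 = digit q (i+j) n2" using digit_shift[of E "i+j" q n1] digit_shift[of E "i+j" q n2] H by simp
      qed
      thus ?thesis by simp
    qed simp
  qed
qed

lemma carry:
  fixes q :: nat
  assumes q: "q \<ge> 2" and k: "k1 < q^\<kappa>" "k2 < q^\<kappa>" and l: "l mod q^d \<noteq> q^d - 1"
  shows "(l*q^\<kappa>+k1) div q^(\<kappa>+d) = (l*q^\<kappa>+k1+k2) div q^(\<kappa>+d)"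
proof -
  have qk: "q^\<kappa> > 0" "q^d > 0" using q by auto
  have a: "(l*q^\<kappa>+k1) div q^\<kappa> = l" using k qk by simp
  have "(l*q^\<kappa>+(k1+k2)) div q^\<kappa> = l + (k1+k2) div q^\<kappa>" using qk by simp
  moreover have "(k1+k2) div q^\<kappa> \<le> 1"
  proof -
    have "k1 + k2 < q^\<kappa> * 2" using k by simp
    hence "(k1+k2) div q^\<kappa> < 2" using qk by (simp add: div_less_iff_less_mult)
    thus ?thesis by simp
  qed
  ultimately have b: "(l*q^\<kappa>+k1+k2) div q^\<kappa> = l \<or> (l*q^\<kappa>+k1+k2) div q^\<kappa> = l + 1"
    by (simp add: add.assoc) linarith
  have c: "(l+1) div q^d = l div q^d"
  proof -
    have "l mod q^d < q^d" using qk by simp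
    hence lt: "l mod q^d + 1 < q^d" using l by linarith
    have "l + 1 = l div q^d * q^d + (l mod q^d + 1)" using div_mult_mod_eq[of l "q^d"] by linarith
    moreover have "(l div q^d * q^d + (l mod q^d + 1)) div q^d = l div q^d" using lt qk
      by (metis add.commute div_less div_mult_self1 less_nat_zero_code add_0 not_gr_zero)
    ultimately show ?thesis by simp
  qed
  have e: "q^(\<kappa>+d) = q^\<kappa> * q^d" by (simp add: power_add)
  show ?thesis unfolding e div_mult2_eq using a b c by auto
qed

lemma Tq_bound:
  assumes q: "q \<ge> 2" and n: "n < q^M"
  shows "Tq q n \<le> M"
proof (cases "n = 0")
  case True thus ?thesis by (simp add: Tq_zero)
next
  case False
  hence "q ^ Tq q n \<le> n" using Tq_char[OF q] by simp
  hence "q ^ Tq q n < q^M" using n by linarith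
  thus ?thesis using q by (simp add: power_less_imp_less_exp less_imp_le)
qed

lemma card_S:
  assumes q: "q \<ge> 2" and d: "d \<le> lam"
  shows "card {l. l < q^lam \<and> l mod q^d = q^d - 1} \<le> q^(lam-d)"
proof -
  have qd: "q^d > 0" using q by simp
  have e: "q^lam = q^(lam-d) * q^d" using d by (simp add: power_add[symmetric])
  have "card {l. l < q^lam \<and> l mod q^d = q^d - 1} \<le> card {..<q^(lam-d)}"
  proof (rule card_inj_on_le[where f = "\<lambda>l. l div q^d"])
    show "inj_on (\<lambda>l. l div q^d) {l. l < q^lam \<and> l mod q^d = q^d - 1}"
    proof (rule inj_onI)
      fix x y assume "x \<in> {l. l < q^lam \<and> l mod q^d = q^d - 1}" "y \<in> {l. l < q^lam \<and> l mod q^d = q^d - 1}"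
        "x div q^d = y div q^d"
      thus "x = y" by (metis (mono_tags, lifting) div_mult_mod_eq mem_Collect_eq)
    qed
    show "(\<lambda>l. l div q^d) ` {l. l < q^lam \<and> l mod q^d = q^d - 1} \<subseteq> {..<q^(lam-d)}"
    proof
      fix y assume "y \<in> (\<lambda>l. l div q^d) ` {l. l < q^lam \<and> l mod q^d = q^d - 1}"
      then obtain x where x: "x < q^lam" "y = x div q^d" by auto
      have "x div q^d < q^(lam-d)" using x(1) e qd by (simp add: div_less_iff_less_mult)
      thus "y \<in> {..<q^(lam-d)}" using x by simp
    qed
  qed simp
  thus ?thesis by simp
qed

theorem mainTheorem3:
  fixes q :: nat
  assumes "q \<ge> 2"
  shows "\<exists>C>0. \<forall>P :: nat \<Rightarrow> nat. \<forall>\<rho> lam \<kappa> :: nat.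
           mono P \<longrightarrow> P (lam + \<kappa> + 1) \<le> \<rho> \<longrightarrow> real \<rho> \<le> 3 / 4 * real lam \<longrightarrow>
           real (card (badSet q P \<rho> lam \<kappa>)) \<le> C * real q ^ (lam - \<rho> + P (lam + \<kappa> + 1))"
proof (intro exI[of _ 1] conjI allI impI)
  fix P :: "nat \<Rightarrow> nat" and \<rho> lam \<kappa> :: nat
  assume mP: "mono P" and pr: "P (lam + \<kappa> + 1) \<le> \<rho>" and rl: "real \<rho> \<le> 3 / 4 * real lam"
  have q: "q \<ge> 2" by fact
  define p where "p = P (lam + \<kappa> + 1)"
  define d where "d = \<rho> - p"
  have rl': "\<rho> \<le> lam" using rl by linarith
  have dl: "d \<le> lam" using rl' d_def by simp
  have sub: "badSet q P \<rho> lam \<kappa> \<subseteq> {l. l < q^lam \<and> l mod q^d = q^d - 1}"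
  proof
    fix l assume "l \<in> badSet q P \<rho> lam \<kappa>"
    then obtain k1 k2 where l: "l < q^lam" and k: "k1 < q^\<kappa>" "k2 < q^\<kappa>" and
      bad: "int (aP q P (l * q ^ \<kappa> + k1 + k2)) - int (aP q P (l * q ^ \<kappa> + k1)) \<noteq>
      int (aPtrunc q P (\<kappa> + \<rho>) (l * q ^ \<kappa> + k1 + k2)) - int (aPtrunc q P (\<kappa> + \<rho>) (l * q ^ \<kappa> + k1))"
      unfolding badSet_def by blast
    show "l \<in> {l. l < q^lam \<and> l mod q^d = q^d - 1}"
    proof (rule ccontr)
      assume "l \<notin> {l. l < q^lam \<and> l mod q^d = q^d - 1}"
      hence lm: "l mod q^d \<noteq> q^d - 1" using l by simp
      define n1 where "n1 = l * q ^ \<kappa> + k1"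
      define n2 where "n2 = l * q ^ \<kappa> + k1 + k2"
      have n12: "n1 \<le> n2" unfolding n1_def n2_def by simp
      have n2b: "n2 < q^(lam+\<kappa>+1)"
      proof -
        have "n2 < l * q^\<kappa> + 2 * q^\<kappa>" using k unfolding n2_def by simp
        also have "\<dots> = (l+2) * q^\<kappa>" by (simp add: algebra_simps)
        also have "\<dots> \<le> (q^lam + 1) * q^\<kappa>" using l by (intro mult_right_mono) auto
        also have "\<dots> \<le> (q * q^lam) * q^\<kappa>"
        proof -
          have "q^lam \<ge> 1" using q by simp
          hence "q^lam + 1 \<le> 2 * q^lam" by simp
          also have "\<dots> \<le> q * q^lam" using q by (intro mult_right_mono) auto
          finally show ?thesis by (intro mult_right_mono) auto
        qed
        also have "\<dots> = q^(lam+\<kappa>+1)" by (simp add: power_add algebra_simps)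
        finally show ?thesis .
      qed
      have Pb: "P (Tq q n) + (\<kappa> + d) \<le> \<kappa> + \<rho>" if "n \<le> n2" for n
      proof -
        have "Tq q n \<le> lam + \<kappa> + 1" using Tq_bound[OF q] that n2b by simp
        hence "P (Tq q n) \<le> p" using mP p_def by (simp add: monoD)
        thus ?thesis using pr p_def d_def by simp
      qed
      have "Dd q P (\<kappa>+\<rho>) n2 n1 = Dd q P (\<kappa>+\<rho>) n2 n2"
        using D_eq[OF q _ Pb[OF n12] Pb[OF order_refl]] carry[OF q k lm] n1_def n2_def by simp
      moreover have "int (aP q P n1) - int (aPtrunc q P (\<kappa>+\<rho>) n1) = Dd q P (\<kappa>+\<rho>) n2 n1"
        using diff_formula[OF q n12] .
      moreover have "int (aP q P n2) - int (aPtrunc q P (\<kappa>+\<rho>) n2) = Dd q P (\<kappa>+\<rho>) n2 n2"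
        using diff_formula[OF q order_refl] .
      moreover have "n1 + k2 = n2" by (simp add: n1_def n2_def)
      ultimately show False using bad unfolding n1_def[symmetric] by simp
    qed
  qed
  have "card (badSet q P \<rho> lam \<kappa>) \<le> card {l. l < q^lam \<and> l mod q^d = q^d - 1}"
    by (rule card_mono[OF _ sub]) simp
  also have "\<dots> \<le> q^(lam-d)" by (rule card_S[OF q dl])
  also have "lam - d = lam - \<rho> + P (lam + \<kappa> + 1)" using d_def p_def pr rl' by simp
  finally have "card (badSet q P \<rho> lam \<kappa>) \<le> q ^ (lam - \<rho> + P (lam + \<kappa> + 1))" .
  hence "real (card (badSet q P \<rho> lam \<kappa>)) \<le> real (q ^ (lam - \<rho> + P (lam + \<kappa> + 1)))" by linarith
  thus "real (card (badSet q P \<rho> lam \<kappa>)) \<le> 1 * real q ^ (lam - \<rho> + P (lam + \<kappa> + 1))" by simp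
qed simp

end
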